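(* Let $(\mathfrak g,[\cdot,\cdot],\alpha,\varepsilon,B_{\mathfrak g})$ be a quadratic multiplicative color Hom-Lie algebra, $\rho$ a faithful representation of $\mathfrak g$ on $(M,\beta)$ with $\alpha^2=\mathrm{id}$ and $\beta^2=\mathrm{id}$, and assume $\tilde\rho$, $\tilde\rho(x)(f)=-\varepsilon(x,f)\,f\circ\rho(x)$, is a representation of $\mathfrak g$ on $(M^*,\tilde\beta)$, $\tilde\beta(f)=f\circ\beta$. Let $\mathscr D:M\otimes M^*\to\mathfrak g$ be the even linear map with $B_{\mathfrak g}(x,\mathscr D(m\otimes f))=\langle\rho(\alpha(x))(m),f\rangle$ for all $x$, where $\langle n,f\rangle=\varepsilon(n,f)f(n)$, and equip $M\otimes M^*$ with the bracket $[m\otimes f,m'\otimes f']=\rho(\mathscr D(m\otimes f))(m')\otimes\tilde\beta(f')+\varepsilon(m+f,m')\,\beta(m')\otimes\tilde\rho(\mathscr D(m\otimes f))(f')$ and twist $\beta\otimes\tilde\beta$. If $\mathscr D$ is bijective, then $(M\otimes M^*,[\cdot,\cdot],\beta\otimes\tilde\beta)$ is a quadratic color Hom-Leibniz algebra with respect to the bilinear form $B(u,v)=B_{\mathfrak g}(\mathscr D(u),\mathscr D(v))$; that is, $B$ is nondegenerate, $\varepsilon$-symmetric, invariant ($B([u,v],w)=B(u,[v,w])$), and $\beta\otimes\tilde\beta$ is $B$-symmetric.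
   Context: $\mathbb K$ is a field of characteristic zero and $\Gamma$ an abelian group. A bicharacter is a map $\varepsilon:\Gamma\times\Gamma\to\mathbb K\setminus\{0\}$ with $\varepsilon(a,b)\varepsilon(b,a)=1$, $\varepsilon(a,b+c)=\varepsilon(a,b)\varepsilon(a,c)$, $\varepsilon(a+b,c)=\varepsilon(a,c)\varepsilon(b,c)$; for homogeneous elements $\varepsilon(x,y)=\varepsilon(\deg x,\deg y)$. A color Hom-Lie algebra $(\mathfrak g,[\cdot,\cdot],\alpha,\varepsilon)$: $\Gamma$-graded space, even bilinear bracket, even linear $\alpha$, with $[x,y]=-\varepsilon(x,y)[y,x]$ and $\varepsilon(z,x)[\alpha(x),[y,z]]+\varepsilon(x,y)[\alpha(y),[z,x]]+\varepsilon(y,z)[\alpha(z),[x,y]]=0$; multiplicative means $\alpha([x,y])=[\alpha(x),\alpha(y)]$; quadratic means equipped with a nondegenerate $\varepsilon$-symmetric ($B(x,y)=\varepsilon(x,y)B(y,x)$) invariant bilinear form with $\alpha$ $B$-symmetric. A representation of multiplicative $\mathfrak g$ on $(M,\beta)$ is an even linear $\rho:\mathfrak g\to\mathfrak{gl}(M)$ with $\rho([x,y])\circ\beta=\rho(\alpha(x))\circ\rho(y)-\varepsilon(x,y)\rho(\alpha(y))\circ\rho(x)$ and $\beta\circ\rho(x)=\rho(\alpha(x))\circ\beta$; faithful means injective. A color Hom-Leibniz algebra $(L,[\cdot,\cdot],\tau,\varepsilon)$ is a $\Gamma$-graded space with even bilinear bracket and even linear $\tau$ satisfying $[\tau(u),[v,w]]=[[u,v],\tau(w)]+\varepsilon(u,v)[\tau(v),[u,w]]$;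 it is quadratic if equipped with a nondegenerate, $\varepsilon$-symmetric, invariant bilinear form for which $\tau$ is symmetric. *)

theory Defs
  imports Complex_Main
begin

(* Vector spaces over a field 'k are encoded by a scalar multiplication
   s :: 'k => 'v => 'v on a type 'v :: ab_group_add (HOL.Vector_Spaces). *)

definition bicharacter :: "('g::ab_group_add \<Rightarrow> 'g \<Rightarrow> 'k::field) \<Rightarrow> bool" where
  "bicharacter eps \<longleftrightarrow>
     (\<forall>a b. eps a b \<noteq> 0) \<and>
     (\<forall>a b. eps a b * eps b a = 1) \<and>
     (\<forall>a b c. eps a (b + c) = eps a b * eps a c) \<and>
     (\<forall>a b c. eps (a + b) c = eps a c * eps b c)"

definition graded_space ::
  "('k::field \<Rightarrow> 'v::ab_group_add \<Rightarrow> 'v) \<Rightarrow> ('g \<Rightarrow> 'v set) \<Rightarrow> bool" where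
  "graded_space s V \<longleftrightarrow>
     Vector_Spaces.vector_space s \<and>
     (\<forall>a. Modules.module.subspace s (V a)) \<and>
     (\<forall>v. \<exists>S c. finite S \<and> (\<forall>a\<in>S. c a \<in> V a) \<and> v = (\<Sum>a\<in>S. c a)) \<and>
     (\<forall>S c. finite S \<longrightarrow> (\<forall>a\<in>S. c a \<in> V a) \<longrightarrow> (\<Sum>a\<in>S. c a) = 0 \<longrightarrow> (\<forall>a\<in>S. c a = 0))"

definition bilin ::
  "('k::field \<Rightarrow> 'u::ab_group_add \<Rightarrow> 'u) \<Rightarrow> ('k \<Rightarrow> 'v::ab_group_add \<Rightarrow> 'v) \<Rightarrow>
   ('k \<Rightarrow> 'w::ab_group_add \<Rightarrow> 'w) \<Rightarrow> ('u \<Rightarrow> 'v \<Rightarrow> 'w) \<Rightarrow> bool" where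
  "bilin s1 s2 s3 h \<longleftrightarrow>
     (\<forall>x. Vector_Spaces.linear s2 s3 (h x)) \<and> (\<forall>y. Vector_Spaces.linear s1 s3 (\<lambda>x. h x y))"

definition even_map ::
  "('k::field \<Rightarrow> 'u::ab_group_add \<Rightarrow> 'u) \<Rightarrow> ('k \<Rightarrow> 'v::ab_group_add \<Rightarrow> 'v) \<Rightarrow>
   ('g \<Rightarrow> 'u set) \<Rightarrow> ('g \<Rightarrow> 'v set) \<Rightarrow> ('u \<Rightarrow> 'v) \<Rightarrow> bool" where
  "even_map s1 s2 U V f \<longleftrightarrow> Vector_Spaces.linear s1 s2 f \<and> (\<forall>a. f ` U a \<subseteq> V a)"

definition even_bilin ::
  "('k::field \<Rightarrow> 'u::ab_group_add \<Rightarrow> 'u) \<Rightarrow> ('k \<Rightarrow> 'v::ab_group_add \<Rightarrow> 'v) \<Rightarrow>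
   ('k \<Rightarrow> 'w::ab_group_add \<Rightarrow> 'w) \<Rightarrow>
   ('g::ab_group_add \<Rightarrow> 'u set) \<Rightarrow> ('g \<Rightarrow> 'v set) \<Rightarrow> ('g \<Rightarrow> 'w set) \<Rightarrow>
   ('u \<Rightarrow> 'v \<Rightarrow> 'w) \<Rightarrow> bool" where
  "even_bilin s1 s2 s3 U V W h \<longleftrightarrow> bilin s1 s2 s3 h \<and>
     (\<forall>a b x y. x \<in> U a \<longrightarrow> y \<in> V b \<longrightarrow> h x y \<in> W (a + b))"

definition color_hom_lie ::
  "('k::field \<Rightarrow> 'a::ab_group_add \<Rightarrow> 'a) \<Rightarrow> ('g::ab_group_add \<Rightarrow> 'a set) \<Rightarrow>
   ('a \<Rightarrow> 'a \<Rightarrow> 'a) \<Rightarrow> ('a \<Rightarrow> 'a) \<Rightarrow> ('g \<Rightarrow> 'g \<Rightarrow> 'k) \<Rightarrow> bool" where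
  "color_hom_lie s G br al eps \<longleftrightarrow>
     graded_space s G \<and> even_bilin s s s G G G br \<and> even_map s s G G al \<and>
     (\<forall>a b x y. x \<in> G a \<longrightarrow> y \<in> G b \<longrightarrow> br x y = s (- eps a b) (br y x)) \<and>
     (\<forall>a b c x y z. x \<in> G a \<longrightarrow> y \<in> G b \<longrightarrow> z \<in> G c \<longrightarrow>
        s (eps c a) (br (al x) (br y z)) + s (eps a b) (br (al y) (br z x))
        + s (eps b c) (br (al z) (br x y)) = 0)"

definition multiplicative :: "('a \<Rightarrow> 'a \<Rightarrow> 'a) \<Rightarrow> ('a \<Rightarrow> 'a) \<Rightarrow> bool" where
  "multiplicative br al \<longleftrightarrow> (\<forall>x y. al (br x y) = br (al x) (al y))"

definition quadratic_color_hom_lie ::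
  "('k::field \<Rightarrow> 'a::ab_group_add \<Rightarrow> 'a) \<Rightarrow> ('g::ab_group_add \<Rightarrow> 'a set) \<Rightarrow>
   ('a \<Rightarrow> 'a \<Rightarrow> 'a) \<Rightarrow> ('a \<Rightarrow> 'a) \<Rightarrow> ('g \<Rightarrow> 'g \<Rightarrow> 'k) \<Rightarrow> ('a \<Rightarrow> 'a \<Rightarrow> 'k) \<Rightarrow> bool" where
  "quadratic_color_hom_lie s G br al eps B \<longleftrightarrow>
     color_hom_lie s G br al eps \<and> bilin s s (*) B \<and>
     (\<forall>x. (\<forall>y. B x y = 0) \<longrightarrow> x = 0) \<and> (\<forall>y. (\<forall>x. B x y = 0) \<longrightarrow> y = 0) \<and>
     (\<forall>a b x y. x \<in> G a \<longrightarrow> y \<in> G b \<longrightarrow> B x y = eps a b * B y x) \<and>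
     (\<forall>x y z. B (br x y) z = B x (br y z)) \<and>
     (\<forall>x y. B (al x) y = B x (al y))"

definition hom_lie_rep ::
  "('k::field \<Rightarrow> 'a::ab_group_add \<Rightarrow> 'a) \<Rightarrow> ('g::ab_group_add \<Rightarrow> 'a set) \<Rightarrow>
   ('a \<Rightarrow> 'a \<Rightarrow> 'a) \<Rightarrow> ('a \<Rightarrow> 'a) \<Rightarrow> ('g \<Rightarrow> 'g \<Rightarrow> 'k) \<Rightarrow>
   ('k \<Rightarrow> 'm::ab_group_add \<Rightarrow> 'm) \<Rightarrow> ('g \<Rightarrow> 'm set) \<Rightarrow>
   ('a \<Rightarrow> 'm \<Rightarrow> 'm) \<Rightarrow> ('m \<Rightarrow> 'm) \<Rightarrow> bool" where
  "hom_lie_rep s G br al eps sM MG rho be \<longleftrightarrow>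
     graded_space sM MG \<and> even_map sM sM MG MG be \<and>
     even_bilin s sM sM G MG MG rho \<and>
     (\<forall>a b x y. x \<in> G a \<longrightarrow> y \<in> G b \<longrightarrow>
        rho (br x y) \<circ> be = (\<lambda>m. rho (al x) (rho y m) - sM (eps a b) (rho (al y) (rho x m)))) \<and>
     (\<forall>x. be \<circ> rho x = rho (al x) \<circ> be)"

definition dual_grading ::
  "('g::ab_group_add \<Rightarrow> 'm set) \<Rightarrow> ('f \<Rightarrow> 'm \<Rightarrow> 'k::zero) \<Rightarrow> 'g \<Rightarrow> 'f set" where
  "dual_grading MG ev c = {f. \<forall>d m. m \<in> MG d \<longrightarrow> d \<noteq> - c \<longrightarrow> ev f m = 0}"

(* (F, ev) is the graded dual M* of the graded space M: ev is the evaluation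
   pairing, f \<mapsto> ev f is injective, and its image consists of the finite sums
   of homogeneous linear functionals *)
definition is_graded_dual ::
  "('k::field \<Rightarrow> 'm::ab_group_add \<Rightarrow> 'm) \<Rightarrow> ('g::ab_group_add \<Rightarrow> 'm set) \<Rightarrow>
   ('k \<Rightarrow> 'f::ab_group_add \<Rightarrow> 'f) \<Rightarrow> ('f \<Rightarrow> 'm \<Rightarrow> 'k) \<Rightarrow> bool" where
  "is_graded_dual sM MG sF ev \<longleftrightarrow>
     bilin sF sM (*) ev \<and> inj ev \<and> graded_space sF (dual_grading MG ev) \<and>
     (\<forall>c \<phi>. Vector_Spaces.linear sM (*) \<phi> \<longrightarrow>
        (\<forall>d m. m \<in> MG d \<longrightarrow> d \<noteq> - c \<longrightarrow> \<phi> m = 0) \<longrightarrow> (\<exists>f. ev f = \<phi>))"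

definition is_tensor_product ::
  "('k::field \<Rightarrow> 'm::ab_group_add \<Rightarrow> 'm) \<Rightarrow> ('k \<Rightarrow> 'f::ab_group_add \<Rightarrow> 'f) \<Rightarrow>
   ('k \<Rightarrow> 't::ab_group_add \<Rightarrow> 't) \<Rightarrow> ('m \<Rightarrow> 'f \<Rightarrow> 't) \<Rightarrow> bool" where
  "is_tensor_product sM sF sT tens \<longleftrightarrow>
     bilin sM sF sT tens \<and>
     Modules.module.span sT {tens m f | m f. True} = UNIV \<and>
     (\<forall>\<phi>. bilin sM sF (*) \<phi> \<longrightarrow>
        (\<exists>L. Vector_Spaces.linear sT (*) L \<and> (\<forall>m f. L (tens m f) = \<phi> m f)))"

definition tensor_grading ::
  "('k::field \<Rightarrow> 't::ab_group_add \<Rightarrow> 't) \<Rightarrow> ('g::ab_group_add \<Rightarrow> 'm set) \<Rightarrow> ('g \<Rightarrow> 'f set) \<Rightarrow>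
   ('m \<Rightarrow> 'f \<Rightarrow> 't) \<Rightarrow> 'g \<Rightarrow> 't set" where
  "tensor_grading sT MG FG tens c =
     Modules.module.span sT {tens m f | m f a b. m \<in> MG a \<and> f \<in> FG b \<and> a + b = c}"

definition color_hom_leibniz ::
  "('k::field \<Rightarrow> 'l::ab_group_add \<Rightarrow> 'l) \<Rightarrow> ('g::ab_group_add \<Rightarrow> 'l set) \<Rightarrow>
   ('l \<Rightarrow> 'l \<Rightarrow> 'l) \<Rightarrow> ('l \<Rightarrow> 'l) \<Rightarrow> ('g \<Rightarrow> 'g \<Rightarrow> 'k) \<Rightarrow> bool" where
  "color_hom_leibniz s V br tau eps \<longleftrightarrow>
     graded_space s V \<and> even_bilin s s s V V V br \<and> even_map s s V V tau \<and>
     (\<forall>a b c u v w. u \<in> V a \<longrightarrow> v \<in> V b \<longrightarrow> w \<in> V c \<longrightarrow>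
        br (tau u) (br v w) = br (br u v) (tau w) + s (eps a b) (br (tau v) (br u w)))"

definition quadratic_color_hom_leibniz ::
  "('k::field \<Rightarrow> 'l::ab_group_add \<Rightarrow> 'l) \<Rightarrow> ('g::ab_group_add \<Rightarrow> 'l set) \<Rightarrow>
   ('l \<Rightarrow> 'l \<Rightarrow> 'l) \<Rightarrow> ('l \<Rightarrow> 'l) \<Rightarrow> ('g \<Rightarrow> 'g \<Rightarrow> 'k) \<Rightarrow> ('l \<Rightarrow> 'l \<Rightarrow> 'k) \<Rightarrow> bool" where
  "quadratic_color_hom_leibniz s V br tau eps B \<longleftrightarrow>
     color_hom_leibniz s V br tau eps \<and> bilin s s (*) B \<and>
     (\<forall>x. (\<forall>y. B x y = 0) \<longrightarrow> x = 0) \<and> (\<forall>y. (\<forall>x. B x y = 0) \<longrightarrow> y = 0) \<and>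
     (\<forall>a b x y. x \<in> V a \<longrightarrow> y \<in> V b \<longrightarrow> B x y = eps a b * B y x) \<and>
     (\<forall>x y z. B (br x y) z = B x (br y z)) \<and>
     (\<forall>x y. B (tau x) y = B x (tau y))"

end

theory Submission
  imports Defs
begin


lemma lin_add: "Vector_Spaces.linear s1 s2 f \<Longrightarrow> f (x + y) = f x + f y"
  by (simp add: Vector_Spaces.linear_iff)
lemma lin_scale: "Vector_Spaces.linear s1 s2 f \<Longrightarrow> f (s1 c x) = s2 c (f x)"
  by (simp add: Vector_Spaces.linear_iff)
lemma lin_zero: "Vector_Spaces.linear s1 s2 f \<Longrightarrow> f 0 = 0"
  using module_hom.zero module_hom_iff_linear by metis
lemma lin_diff: "Vector_Spaces.linear s1 s2 f \<Longrightarrow> f (x - y) = f x - f y"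
  using module_hom.diff module_hom_iff_linear by metis
lemma lin_sum: "Vector_Spaces.linear s1 s2 f \<Longrightarrow> f (sum g A) = (\<Sum>a\<in>A. f (g a))"
  using module_hom.sum module_hom_iff_linear by metis
lemma lin_vs1: "Vector_Spaces.linear s1 s2 f \<Longrightarrow> vector_space s1"
  by (simp add: Vector_Spaces.linear_iff)
lemma lin_vs2: "Vector_Spaces.linear s1 s2 f \<Longrightarrow> vector_space s2"
  by (simp add: Vector_Spaces.linear_iff)
lemma lin_comp: "Vector_Spaces.linear s1 s2 f \<Longrightarrow> Vector_Spaces.linear s2 s3 g \<Longrightarrow>
   Vector_Spaces.linear s1 s3 (\<lambda>x. g (f x))"
  using Vector_Spaces.linear_compose[of s1 s2 f s3 g] by (simp add: comp_def)

lemma lin_eq_on_span: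
  assumes "Vector_Spaces.linear s1 s2 f" "Vector_Spaces.linear s1 s2 g"
    "\<And>x. x \<in> B \<Longrightarrow> f x = g x" "x \<in> Modules.module.span s1 B"
  shows "f x = g x"
proof -
  interpret vector_space_pair s1 s2
    using assms(1) unfolding vector_space_pair_def by (simp add: Vector_Spaces.linear_iff)
  show ?thesis using linear_eq_on[OF assms(1,2) assms(4)] assms(3) by blast
qed

lemma graded_span_UNIV:
  assumes "graded_space s V"
  shows "Modules.module.span s (\<Union>a. V a) = UNIV"
proof -
  interpret vector_space s using assms by (simp add: graded_space_def)
  { fix v
    obtain S c where "finite S" "\<forall>a\<in>S. c a \<in> V a" "v = (\<Sum>a\<in>S. c a)"
      using assms unfolding graded_space_def by blast
    hence "v \<in> span (\<Union>a. V a)" by (simp, intro span_sum span_base) blast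
  }
  thus ?thesis by auto
qed

lemma graded_unique:
  assumes "graded_space s V" "finite S" "\<forall>a\<in>S. c a \<in> V a" "x \<in> V b"
    "(\<Sum>a\<in>S. c a) = x" "a \<in> S" "a \<noteq> b"
  shows "c a = 0"
proof -
  interpret vector_space s using assms by (simp add: graded_space_def)
  have sub: "\<And>a. subspace (V a)" using assms(1) by (simp add: graded_space_def)
  define c' where "c' = (\<lambda>d. if d = b then (if b \<in> S then c b else 0) - x else c d)"
  have fin: "finite (insert b S)" using assms(2) by simp
  have mem: "\<forall>d\<in>insert b S. c' d \<in> V d"
    using assms(3,4) sub by (auto simp: c'_def intro: subspace_diff subspace_0 subspace_neg)
  have "(\<Sum>d\<in>insert b S. c' d) = 0"
  proof (cases "b \<in> S")
    case True
    hence "(\<Sum>d\<in>insert b S. c' d) = c' b + (\<Sum>d\<in>S - {b}. c' d)"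
      by (simp add: insert_absorb sum.remove[OF assms(2)])
    also have "(\<Sum>d\<in>S - {b}. c' d) = (\<Sum>d\<in>S - {b}. c d)"
      by (rule sum.cong) (auto simp: c'_def)
    also have "c' b = c b - x" using True by (simp add: c'_def)
    also have "(\<Sum>d\<in>S - {b}. c d) = x - c b"
      using assms(5) True sum.remove[OF assms(2) True, of c] by (metis add_diff_cancel_left')
    finally show ?thesis by simp
  next
    case False
    hence "(\<Sum>d\<in>insert b S. c' d) = c' b + (\<Sum>d\<in>S. c' d)"
      using assms(2) by simp
    also have "(\<Sum>d\<in>S. c' d) = (\<Sum>d\<in>S. c d)"
      by (rule sum.cong) (use False in \<open>auto simp: c'_def\<close>)
    finally show ?thesis using False assms(5) by (simp add: c'_def)
  qed
  hence "\<forall>d\<in>insert b S. c' d = 0"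
    using assms(1) fin mem unfolding graded_space_def by blast
  thus ?thesis using assms(6,7) by (auto simp: c'_def)
qed

lemma span_decomp:
  assumes vs: "vector_space s" and sub: "\<And>a. Modules.module.subspace s (V a)"
    and v: "v \<in> Modules.module.span s (\<Union>a. V a)"
  shows "\<exists>S c. finite S \<and> (\<forall>a\<in>S. c a \<in> V a) \<and> v = (\<Sum>a\<in>S. c a)"
proof -
  interpret vector_space s by fact
  define P where "P = {v. \<exists>S c. finite S \<and> (\<forall>a\<in>S. c a \<in> V a) \<and> v = (\<Sum>a\<in>S. c a)}"
  have Pi: "x \<in> P" if "finite S" "\<forall>a\<in>S. c a \<in> V a" "x = (\<Sum>a\<in>S. c a)" for x S c
    unfolding P_def mem_Collect_eq by (rule exI[of _ S], rule exI[of _ c]) (use that in simp)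
  have Pe: "\<exists>S c. finite S \<and> (\<forall>a\<in>S. c a \<in> V a) \<and> x = (\<Sum>a\<in>S. c a)" if "x \<in> P" for x
    using that unfolding P_def by simp
  have P0: "0 \<in> P" by (rule Pi[of "{}"]) auto
  have Pscale: "s k x \<in> P" if xP: "x \<in> P" for k x
  proof -
    obtain S1 c1 where h: "finite S1" "\<forall>a\<in>S1. c1 a \<in> V a" "x = (\<Sum>a\<in>S1. c1 a)"
      using Pe[OF xP] by (elim exE conjE)
    show ?thesis
    proof (rule Pi[of S1 "\<lambda>a. s k (c1 a)"])
      show "finite S1" by fact
      show "\<forall>a\<in>S1. s k (c1 a) \<in> V a" using h(2) sub subspace_scale by simp
      show "s k x = (\<Sum>a\<in>S1. s k (c1 a))" unfolding h(3) by (rule scale_sum_right)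
    qed
  qed
  have Padd: "x + y \<in> P" if xP: "x \<in> P" and yP: "y \<in> P" for x y
  proof -
    obtain S1 c1 where h1: "finite S1" "\<forall>a\<in>S1. c1 a \<in> V a" "x = (\<Sum>a\<in>S1. c1 a)"
      using Pe[OF xP] by (elim exE conjE)
    obtain S2 c2 where h2: "finite S2" "\<forall>a\<in>S2. c2 a \<in> V a" "y = (\<Sum>a\<in>S2. c2 a)"
      using Pe[OF yP] by (elim exE conjE)
    define c where "c = (\<lambda>a. (if a \<in> S1 then c1 a else 0) + (if a \<in> S2 then c2 a else 0))"
    have e1: "(\<Sum>a\<in>S1 \<union> S2. (if a \<in> S1 then c1 a else 0)) = x"
      unfolding h1(3) using h1(1) h2(1) by (simp add: sum.If_cases Int_absorb2)
    have e2: "(\<Sum>a\<in>S1 \<union> S2. (if a \<in> S2 then c2 a else 0)) = y"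
      unfolding h2(3) using h1(1) h2(1) by (simp add: sum.If_cases Int_absorb2)
    show ?thesis
    proof (rule Pi[of "S1 \<union> S2" c])
      show "finite (S1 \<union> S2)" using h1(1) h2(1) by simp
      show "\<forall>a\<in>S1 \<union> S2. c a \<in> V a"
      proof
        fix a assume "a \<in> S1 \<union> S2"
        have "(if a \<in> S1 then c1 a else 0) \<in> V a" using h1(2) sub subspace_0 by simp
        moreover have "(if a \<in> S2 then c2 a else 0) \<in> V a" using h2(2) sub subspace_0 by simp
        ultimately show "c a \<in> V a" unfolding c_def using sub subspace_add by simp
      qed
      show "x + y = (\<Sum>a\<in>S1 \<union> S2. c a)" unfolding c_def sum.distrib e1 e2 ..
    qed
  qed
  have "subspace P" by (rule subspaceI[OF P0 Padd Pscale])
  moreover have "(\<Union>a. V a) \<subseteq> P"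
  proof
    fix x assume "x \<in> (\<Union>a. V a)"
    then obtain a where a: "x \<in> V a" by auto
    show "x \<in> P" by (rule Pi[of "{a}" "\<lambda>_. x"]) (use a in simp_all)
  qed
  ultimately have "span (\<Union>a. V a) \<subseteq> P" by (intro span_minimal)
  hence "v \<in> P" using v by (rule subsetD)
  thus ?thesis by (rule Pe)
qed

lemma eps_facts:
  assumes "bicharacter eps"
  shows "eps a (b + c) = eps a b * eps a c" "eps (a + b) c = eps a c * eps b c"
    "eps a b * eps b a = 1" "eps a b \<noteq> 0"
  using assms unfolding bicharacter_def by auto

lemma eps_key:
  assumes "bicharacter eps"
  shows "eps A c * eps (e + c) (A + d) * eps A d = eps (e + (A + c)) d * eps e A"
proof -
  note E = eps_facts[OF assms]
  have "eps A c * eps (e + c) (A + d) * eps A d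
      = (eps A c * eps c A) * (eps e A * eps e d * eps c d * eps A d)"
    unfolding E(1,2) by (simp only: mult_ac)
  also have "\<dots> = eps e A * eps e d * eps c d * eps A d" using E(3)[of A c] by simp
  also have "\<dots> = eps (e + (A + c)) d * eps e A" unfolding E(1,2) by (simp only: mult_ac)
  finally show ?thesis .
qed


lemma grp3: "(X::'a::ab_group_add) + A + B = 0 \<Longrightarrow> X = - A - B"
proof -
  assume h: "X + A + B = 0"
  have "X = (X + A + B) - A - B" by simp
  also have "\<dots> = - A - B" by (simp only: h diff_0)
  finally show ?thesis .
qed

lemma lie_leibniz:
  assumes L: "color_hom_lie s G br al eps" and E: "bicharacter eps"
    and x: "x \<in> G a" and y: "y \<in> G b" and z: "z \<in> G c"
  shows "br (al x) (br y z) = br (br x y) (al z) + s (eps a b) (br (al y) (br x z))"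
proof -
  note C = L[unfolded color_hom_lie_def]
  note gs = C[THEN conjunct1] and eb = C[THEN conjunct2, THEN conjunct1]
    and em = C[THEN conjunct2, THEN conjunct2, THEN conjunct1]
    and sk = C[THEN conjunct2, THEN conjunct2, THEN conjunct2, THEN conjunct1]
    and jac = C[THEN conjunct2, THEN conjunct2, THEN conjunct2, THEN conjunct2]
  interpret vector_space s using gs by (simp add: graded_space_def)
  note Ef = eps_facts[OF E]
  have brdeg: "\<And>a b x y. x \<in> G a \<Longrightarrow> y \<in> G b \<Longrightarrow> br x y \<in> G (a + b)"
    using eb unfolding even_bilin_def by simp
  have brlin: "\<And>x. Vector_Spaces.linear s s (br x)"
    using eb unfolding even_bilin_def bilin_def by simp
  have aldeg: "\<And>a x. x \<in> G a \<Longrightarrow> al x \<in> G a"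
    using em unfolding even_map_def by auto
  define X where "X = br (al x) (br y z)"
  define Y where "Y = br (al y) (br z x)"
  define Z where "Z = br (al z) (br x y)"
  have J: "s (eps c a) X + s (eps a b) Y + s (eps b c) Z = 0"
    unfolding X_def Y_def Z_def by (rule jac[rule_format, OF x y z])
  have "s (eps a c) (s (eps c a) X + s (eps a b) Y + s (eps b c) Z) = 0"
    using J by simp
  hence J': "s (eps a c * eps c a) X + s (eps a c * eps a b) Y + s (eps a c * eps b c) Z = 0"
    by (simp add: scale_right_distrib)
  have one: "eps a c * eps c a = 1" using Ef(3) .
  have J'': "X = - s (eps a c * eps a b) Y - s (eps a c * eps b c) Z"
    using J' unfolding one scale_one by (rule grp3)
  have 1: "br (br x y) (al z) = s (- eps (a + b) c) Z"
    unfolding Z_def by (rule sk[rule_format, OF brdeg[OF x y] aldeg[OF z]])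
  have 2: "br x z = s (- eps a c) (br z x)" by (rule sk[rule_format, OF x z])
  have 3: "br (al y) (br x z) = s (- eps a c) Y"
    unfolding 2 Y_def by (rule lin_scale[OF brlin])
  show ?thesis
    unfolding X_def[symmetric] 1 3 J'' Ef(2)
    by (simp add: mult_ac)
qed


theorem mainTheorem15:
  fixes eps :: "'g::ab_group_add \<Rightarrow> 'g \<Rightarrow> 'k::field_char_0"
    and s :: "'k \<Rightarrow> 'a::ab_group_add \<Rightarrow> 'a"
    and G :: "'g \<Rightarrow> 'a set"
    and br :: "'a \<Rightarrow> 'a \<Rightarrow> 'a" and al :: "'a \<Rightarrow> 'a" and Bg :: "'a \<Rightarrow> 'a \<Rightarrow> 'k"
    and sM :: "'k \<Rightarrow> 'm::ab_group_add \<Rightarrow> 'm" and MG :: "'g \<Rightarrow> 'm set"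
    and rho :: "'a \<Rightarrow> 'm \<Rightarrow> 'm" and be :: "'m \<Rightarrow> 'm"
    and sF :: "'k \<Rightarrow> 'f::ab_group_add \<Rightarrow> 'f" and ev :: "'f \<Rightarrow> 'm \<Rightarrow> 'k"
    and rt :: "'a \<Rightarrow> 'f \<Rightarrow> 'f" and bt :: "'f \<Rightarrow> 'f"
    and sT :: "'k \<Rightarrow> 't::ab_group_add \<Rightarrow> 't" and tens :: "'m \<Rightarrow> 'f \<Rightarrow> 't"
    and D :: "'t \<Rightarrow> 'a" and brT :: "'t \<Rightarrow> 't \<Rightarrow> 't" and tau :: "'t \<Rightarrow> 't"
  assumes eps: "bicharacter eps"
    and quad: "quadratic_color_hom_lie s G br al eps Bg"
    and mult: "multiplicative br al"
    and rep: "hom_lie_rep s G br al eps sM MG rho be"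
    and faithful: "inj rho"
    and al2: "al \<circ> al = id"
    and be2: "be \<circ> be = id"
    and dual: "is_graded_dual sM MG sF ev"
    and bt_def: "\<forall>f. ev (bt f) = ev f \<circ> be"
    and rt_bilin: "bilin s sF sF rt"
    and rt_def: "\<forall>a b x f. x \<in> G a \<longrightarrow> f \<in> dual_grading MG ev b \<longrightarrow>
                   ev (rt x f) = (\<lambda>m. - (eps a b * ev f (rho x m)))"
    and rt_rep: "hom_lie_rep s G br al eps sF (dual_grading MG ev) rt bt"
    and tensor: "is_tensor_product sM sF sT tens"
    and D_even: "even_map sT s (tensor_grading sT MG (dual_grading MG ev) tens) G D"
    and D_def: "\<forall>a b c x m f. x \<in> G a \<longrightarrow> m \<in> MG b \<longrightarrow> f \<in> dual_grading MG ev c \<longrightarrow>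
                   Bg x (D (tens m f)) = eps (a + b) c * ev f (rho (al x) m)"
    and brT_bilin: "bilin sT sT sT brT"
    and brT_def: "\<forall>a b c m f m' f'. m \<in> MG a \<longrightarrow> f \<in> dual_grading MG ev b \<longrightarrow> m' \<in> MG c \<longrightarrow>
                   brT (tens m f) (tens m' f') =
                     tens (rho (D (tens m f)) m') (bt f')
                     + sT (eps (a + b) c) (tens (be m') (rt (D (tens m f)) f'))"
    and tau_lin: "Vector_Spaces.linear sT sT tau"
    and tau_def: "\<forall>m f. tau (tens m f) = tens (be m) (bt f)"
    and D_bij: "bij D"
  shows "quadratic_color_hom_leibniz sT (tensor_grading sT MG (dual_grading MG ev) tens)
           brT tau eps (\<lambda>u v. Bg (D u) (D v))"
proof -
  let ?FG = "dual_grading MG ev"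
  let ?TG = "tensor_grading sT MG (dual_grading MG ev) tens"
  let ?H = "{tens m f | m f a b. m \<in> MG a \<and> f \<in> dual_grading MG ev b}"
  note Ef = eps_facts[OF eps]
  note Q = quad[unfolded quadratic_color_hom_lie_def]
  note chl = Q[THEN conjunct1] and Bbil = Q[THEN conjunct2, THEN conjunct1]
    and ndl = Q[THEN conjunct2, THEN conjunct2, THEN conjunct1]
    and ndr = Q[THEN conjunct2, THEN conjunct2, THEN conjunct2, THEN conjunct1]
    and Bsym = Q[THEN conjunct2, THEN conjunct2, THEN conjunct2, THEN conjunct2, THEN conjunct1]
    and Binv = Q[THEN conjunct2, THEN conjunct2, THEN conjunct2, THEN conjunct2, THEN conjunct2, THEN conjunct1]
    and Bal = Q[THEN conjunct2, THEN conjunct2, THEN conjunct2, THEN conjunct2, THEN conjunct2, THEN conjunct2]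
  note C = chl[unfolded color_hom_lie_def]
  note gsG = C[THEN conjunct1] and ebr = C[THEN conjunct2, THEN conjunct1]
    and eal = C[THEN conjunct2, THEN conjunct2, THEN conjunct1]
  note R = rep[unfolded hom_lie_rep_def]
  note gsM = R[THEN conjunct1] and ebe = R[THEN conjunct2, THEN conjunct1]
    and erho = R[THEN conjunct2, THEN conjunct2, THEN conjunct1]
    and rhoid = R[THEN conjunct2, THEN conjunct2, THEN conjunct2, THEN conjunct1]
    and berho = R[THEN conjunct2, THEN conjunct2, THEN conjunct2, THEN conjunct2]
  note RT = rt_rep[unfolded hom_lie_rep_def]
  note gsF = RT[THEN conjunct1] and ebt = RT[THEN conjunct2, THEN conjunct1]
  note DU = dual[unfolded is_graded_dual_def]
  note evbil = DU[THEN conjunct1]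
  note TP = tensor[unfolded is_tensor_product_def]
  note tbil = TP[THEN conjunct1] and tspan = TP[THEN conjunct2, THEN conjunct1]
  note DE = D_even[unfolded even_map_def]
  note Dlin = DE[THEN conjunct1] and Ddeg0 = DE[THEN conjunct2]

  interpret Gs: vector_space s using gsG by (simp add: graded_space_def)
  interpret Ts: vector_space sT using lin_vs1[OF tau_lin] .

  have Bl2: "\<And>x. Vector_Spaces.linear s (*) (Bg x)" using Bbil unfolding bilin_def by simp
  have Bl1: "\<And>y. Vector_Spaces.linear s (*) (\<lambda>x. Bg x y)" using Bbil unfolding bilin_def by simp
  have brl2: "\<And>x. Vector_Spaces.linear s s (br x)" using ebr unfolding even_bilin_def bilin_def by simp
  have brl1: "\<And>y. Vector_Spaces.linear s s (\<lambda>x. br x y)" using ebr unfolding even_bilin_def bilin_def by simp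
  have brdeg: "\<And>a b x y. x \<in> G a \<Longrightarrow> y \<in> G b \<Longrightarrow> br x y \<in> G (a + b)"
    using ebr unfolding even_bilin_def by simp
  have allin: "Vector_Spaces.linear s s al" using eal unfolding even_map_def by simp
  have aldeg: "\<And>a x. x \<in> G a \<Longrightarrow> al x \<in> G a" using eal unfolding even_map_def by auto
  have bedeg: "\<And>a x. x \<in> MG a \<Longrightarrow> be x \<in> MG a" using ebe unfolding even_map_def by auto
  have btdeg: "\<And>a x. x \<in> ?FG a \<Longrightarrow> bt x \<in> ?FG a" using ebt unfolding even_map_def by auto
  have rhodeg: "\<And>a b x y. x \<in> G a \<Longrightarrow> y \<in> MG b \<Longrightarrow> rho x y \<in> MG (a + b)"
    using erho unfolding even_bilin_def by simp
  have rtdeg: "\<And>a b x y. x \<in> G a \<Longrightarrow> y \<in> ?FG b \<Longrightarrow> rt x y \<in> ?FG (a + b)"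
    using RT[THEN conjunct2, THEN conjunct2, THEN conjunct1] unfolding even_bilin_def by simp
  have evl: "\<And>f. Vector_Spaces.linear sM (*) (ev f)" using evbil unfolding bilin_def by simp
  have tl2: "\<And>m. Vector_Spaces.linear sF sT (tens m)" using tbil unfolding bilin_def by simp
  have tl1: "\<And>f. Vector_Spaces.linear sM sT (\<lambda>m. tens m f)" using tbil unfolding bilin_def by simp
  have brTl2: "\<And>u. Vector_Spaces.linear sT sT (brT u)" using brT_bilin unfolding bilin_def by simp
  have brTl1: "\<And>v. Vector_Spaces.linear sT sT (\<lambda>u. brT u v)" using brT_bilin unfolding bilin_def by simp
  have Ddeg: "\<And>a t. t \<in> ?TG a \<Longrightarrow> D t \<in> G a" using Ddeg0 by blast
  have alal: "\<And>x. al (al x) = x" using al2 by (simp add: fun_eq_iff)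
  have bebe: "\<And>x. be (be x) = x" using be2 by (simp add: fun_eq_iff)
  have berho': "\<And>x m. be (rho x m) = rho (al x) (be m)"
    using berho by (simp add: fun_eq_iff)
  have Dinj: "inj D" using D_bij by (rule bij_is_inj)
  have Dsurj: "\<And>z. \<exists>t. z = D t" using D_bij unfolding bij_def surj_def by blast
  have Dzero: "D 0 = 0" by (rule lin_zero[OF Dlin])
  have D0: "\<And>t. D t = 0 \<Longrightarrow> t = 0" using Dinj Dzero by (metis injD)
  have tdeg: "\<And>a b m f. m \<in> MG a \<Longrightarrow> f \<in> ?FG b \<Longrightarrow> tens m f \<in> ?TG (a + b)"
    unfolding tensor_grading_def by (rule Ts.span_base) blast
  have TGsub: "\<And>a. Ts.subspace (?TG a)" unfolding tensor_grading_def by (rule Ts.subspace_span)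

  have Hspan: "Ts.span ?H = UNIV"
  proof -
    have "tens m f \<in> Ts.span ?H" for m f
    proof -
      have exM: "\<forall>v. \<exists>S c. finite S \<and> (\<forall>a\<in>S. c a \<in> MG a) \<and> v = (\<Sum>a\<in>S. c a)"
        using gsM unfolding graded_space_def by (elim conjE) assumption
      have exF: "\<forall>v. \<exists>S c. finite S \<and> (\<forall>a\<in>S. c a \<in> ?FG a) \<and> v = (\<Sum>a\<in>S. c a)"
        using gsF unfolding graded_space_def by (elim conjE) assumption
      obtain S1 cm where h1: "finite S1" "\<forall>a\<in>S1. cm a \<in> MG a" "m = (\<Sum>a\<in>S1. cm a)"
        using exM[rule_format, of m] by (elim exE conjE)
      obtain S2 cf where h2: "finite S2" "\<forall>a\<in>S2. cf a \<in> ?FG a" "f = (\<Sum>a\<in>S2. cf a)"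
        using exF[rule_format, of f] by (elim exE conjE)
      have "tens m f = (\<Sum>a\<in>S1. tens (cm a) f)" unfolding h1(3) by (rule lin_sum[OF tl1])
      also have "\<dots> = (\<Sum>a\<in>S1. \<Sum>b\<in>S2. tens (cm a) (cf b))"
        unfolding h2(3) by (rule sum.cong[OF refl], rule lin_sum[OF tl2])
      also have "\<dots> \<in> Ts.span ?H"
      proof (intro Ts.span_sum Ts.span_base)
        fix a b assume "a \<in> S1" "b \<in> S2"
        thus "tens (cm a) (cf b) \<in> ?H" using h1(2) h2(2) by blast
      qed
      finally show ?thesis .
    qed
    hence "{tens m f | m f. True} \<subseteq> Ts.span ?H" by blast
    hence "Ts.span {tens m f | m f. True} \<subseteq> Ts.span ?H" by (intro Ts.span_minimal) auto
    thus ?thesis using tspan by blast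
  qed
  have HTG: "?H \<subseteq> (\<Union>c. ?TG c)" using tdeg by blast
  have TGspan: "\<And>t. t \<in> Ts.span (\<Union>c. ?TG c)"
    using Ts.span_mono[OF HTG] Hspan by blast
  have Tdec: "\<And>t. \<exists>S c. finite S \<and> (\<forall>a\<in>S. c a \<in> ?TG a) \<and> t = (\<Sum>a\<in>S. c a)"
    by (rule span_decomp[OF Ts.vector_space_axioms TGsub TGspan])

  have Geq: "P = Q" if hq: "\<And>e x. x \<in> G e \<Longrightarrow> Bg x P = Bg x Q" for P Q
  proof -
    have "Bg x P = Bg x Q" for x
    proof (rule lin_eq_on_span[OF Bl1 Bl1])
      show "\<And>x. x \<in> (\<Union>a. G a) \<Longrightarrow> Bg x P = Bg x Q" using hq by blast
      show "x \<in> Gs.span (\<Union>a. G a)" using graded_span_UNIV[OF gsG] by simp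
    qed
    hence "\<forall>x. Bg x (P - Q) = 0" by (simp add: lin_diff[OF Bl2])
    hence "P - Q = 0" using ndr by blast
    thus ?thesis by simp
  qed

  have hom_base: "D (brT (tens m f) (tens m' f')) = br (D (tens m f)) (D (tens m' f'))"
    if hm: "m \<in> MG a" and hf: "f \<in> ?FG b" and hm': "m' \<in> MG c" and hf': "f' \<in> ?FG d"
    for m f m' f' a b c d
  proof (rule Geq)
    fix e x assume x: "x \<in> G e"
    define y where "y = D (tens m f)"
    define z where "z = D (tens m' f')"
    have y: "y \<in> G (a + b)" unfolding y_def by (rule Ddeg[OF tdeg[OF hm hf]])
    define P where "P = ev f' (rho x (rho (al y) (be m')))"
    define Qq where "Qq = ev f' (rho y (rho (al x) (be m')))"
    have l1: "Bg x (D (tens (rho y m') (bt f'))) = eps (e + ((a + b) + c)) d * P"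
    proof -
      have "Bg x (D (tens (rho y m') (bt f'))) = eps (e + ((a + b) + c)) d * ev (bt f') (rho (al x) (rho y m'))"
        using D_def[rule_format, OF x rhodeg[OF y hm'] btdeg[OF hf']] .
      also have "ev (bt f') (rho (al x) (rho y m')) = P"
        unfolding P_def bt_def[rule_format] comp_def berho' alal ..
      finally show ?thesis .
    qed
    have l2: "Bg x (D (tens (be m') (rt y f'))) = eps (e + c) ((a + b) + d) * (- (eps (a + b) d * Qq))"
    proof -
      have "Bg x (D (tens (be m') (rt y f'))) = eps (e + c) ((a + b) + d) * ev (rt y f') (rho (al x) (be m'))"
        using D_def[rule_format, OF x bedeg[OF hm'] rtdeg[OF y hf']] .
      also have "ev (rt y f') (rho (al x) (be m')) = - (eps (a + b) d * Qq)"
        unfolding Qq_def rt_def[rule_format, OF y hf'] ..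
      finally show ?thesis .
    qed
    have lhs: "Bg x (D (brT (tens m f) (tens m' f'))) =
        eps (e + ((a + b) + c)) d * P + eps (a + b) c * (eps (e + c) ((a + b) + d) * (- (eps (a + b) d * Qq)))"
    proof -
      have "brT (tens m f) (tens m' f') = tens (rho y m') (bt f') + sT (eps (a + b) c) (tens (be m') (rt y f'))"
        unfolding y_def by (rule brT_def[rule_format, OF hm hf hm'])
      hence "D (brT (tens m f) (tens m' f')) = D (tens (rho y m') (bt f')) + s (eps (a + b) c) (D (tens (be m') (rt y f')))"
        by (simp add: lin_add[OF Dlin] lin_scale[OF Dlin])
      thus ?thesis by (simp add: lin_add[OF Bl2] lin_scale[OF Bl2] l1 l2)
    qed
    have rhs: "Bg x (br y z) = eps (e + ((a + b) + c)) d * (P - eps e (a + b) * Qq)"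
    proof -
      have "Bg x (br y z) = Bg (br x y) z" using Binv by simp
      also have "\<dots> = eps ((e + (a + b)) + c) d * ev f' (rho (al (br x y)) m')"
        unfolding z_def by (rule D_def[rule_format, OF brdeg[OF x y] hm' hf'])
      also have "rho (al (br x y)) m' = rho (br (al x) (al y)) (be (be m'))"
        using mult unfolding multiplicative_def bebe by simp
      also have "\<dots> = rho x (rho (al y) (be m')) - sM (eps e (a + b)) (rho y (rho (al x) (be m')))"
        using fun_cong[OF rhoid[rule_format, OF aldeg[OF x] aldeg[OF y]], of "be m'"]
        unfolding comp_def alal .
      also have "ev f' \<dots> = P - eps e (a + b) * Qq"
        unfolding P_def Qq_def lin_diff[OF evl] lin_scale[OF evl] ..
      finally show ?thesis by (simp add: add.assoc)
    qed
    have key: "eps (a + b) c * eps (e + c) ((a + b) + d) * eps (a + b) d = eps (e + ((a + b) + c)) d * eps e (a + b)"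
      by (rule eps_key[OF eps])
    show "Bg x (D (brT (tens m f) (tens m' f'))) = Bg x (br (D (tens m f)) (D (tens m' f')))"
      unfolding y_def[symmetric] z_def[symmetric] lhs rhs
    proof -
      have "eps (e + ((a + b) + c)) d * P + eps (a + b) c * (eps (e + c) ((a + b) + d) * (- (eps (a + b) d * Qq)))
         = eps (e + ((a + b) + c)) d * P - (eps (a + b) c * eps (e + c) ((a + b) + d) * eps (a + b) d) * Qq"
        by (simp add: algebra_simps)
      also have "\<dots> = eps (e + ((a + b) + c)) d * (P - eps e (a + b) * Qq)"
        unfolding key by (simp add: algebra_simps)
      finally show "eps (e + ((a + b) + c)) d * P + eps (a + b) c * (eps (e + c) ((a + b) + d) * (- (eps (a + b) d * Qq)))
         = eps (e + ((a + b) + c)) d * (P - eps e (a + b) * Qq)" .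
    qed
  qed

  have tau_base: "D (tau (tens m f)) = al (D (tens m f))"
    if hm: "m \<in> MG b" and hf: "f \<in> ?FG c" for m f b c
  proof (rule Geq)
    fix e x assume x: "x \<in> G e"
    have "Bg x (D (tau (tens m f))) = Bg x (D (tens (be m) (bt f)))" unfolding tau_def[rule_format] ..
    also have "\<dots> = eps (e + b) c * ev (bt f) (rho (al x) (be m))"
      by (rule D_def[rule_format, OF x bedeg[OF hm] btdeg[OF hf]])
    also have "ev (bt f) (rho (al x) (be m)) = ev f (rho x m)"
      unfolding bt_def[rule_format] comp_def berho' alal bebe ..
    also have "eps (e + b) c * ev f (rho x m) = Bg (al x) (D (tens m f))"
      using D_def[rule_format, OF aldeg[OF x] hm hf] unfolding alal by simp
    also have "\<dots> = Bg x (al (D (tens m f)))" using Bal by simp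
    finally show "Bg x (D (tau (tens m f))) = Bg x (al (D (tens m f)))" .
  qed

  have inH: "\<exists>m f a b. u = tens m f \<and> m \<in> MG a \<and> f \<in> ?FG b" if "u \<in> ?H" for u
    using that by blast

  have hom1: "D (brT u v) = br (D u) (D v)" if u: "u \<in> ?H" for u v
  proof (rule lin_eq_on_span[where B="?H" and f="\<lambda>v. D (brT u v)" and g="\<lambda>v. br (D u) (D v)" and x=v])
    show "Vector_Spaces.linear sT s (\<lambda>v. D (brT u v))" by (rule lin_comp[OF brTl2 Dlin])
    show "Vector_Spaces.linear sT s (\<lambda>v. br (D u) (D v))" by (rule lin_comp[OF Dlin brl2])
    show "v \<in> Ts.span ?H" using Hspan by simp
    fix w assume "w \<in> ?H"
    then obtain m' f' c d where w: "w = tens m' f'" "m' \<in> MG c" "f' \<in> ?FG d" by blast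
    obtain m f a b where uu: "u = tens m f" "m \<in> MG a" "f \<in> ?FG b" using u by blast
    show "D (brT u w) = br (D u) (D w)" unfolding uu(1) w(1) by (rule hom_base[OF uu(2,3) w(2,3)])
  qed
  have hom: "D (brT u v) = br (D u) (D v)" for u v
  proof (rule lin_eq_on_span[where B="?H" and f="\<lambda>u. D (brT u v)" and g="\<lambda>u. br (D u) (D v)" and x=u])
    show "Vector_Spaces.linear sT s (\<lambda>u. D (brT u v))" by (rule lin_comp[OF brTl1 Dlin])
    show "Vector_Spaces.linear sT s (\<lambda>u. br (D u) (D v))" by (rule lin_comp[OF Dlin brl1])
    show "u \<in> Ts.span ?H" using Hspan by simp
    fix w assume "w \<in> ?H"
    thus "D (brT w v) = br (D w) (D v)" by (rule hom1)
  qed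
  have Dtau: "D (tau u) = al (D u)" for u
  proof (rule lin_eq_on_span[where B="?H" and f="\<lambda>u. D (tau u)" and g="\<lambda>u. al (D u)" and x=u])
    show "Vector_Spaces.linear sT s (\<lambda>u. D (tau u))" by (rule lin_comp[OF tau_lin Dlin])
    show "Vector_Spaces.linear sT s (\<lambda>u. al (D u))" by (rule lin_comp[OF Dlin allin])
    show "u \<in> Ts.span ?H" using Hspan by simp
    fix w assume "w \<in> ?H"
    then obtain m f a b where w: "w = tens m f" "m \<in> MG a" "f \<in> ?FG b" by blast
    show "D (tau w) = al (D w)" unfolding w(1) by (rule tau_base[OF w(2,3)])
  qed

  have Dpre: "t \<in> ?TG c" if Dt: "D t \<in> G c" for t c
  proof -
    obtain S ct where h: "finite S" "\<forall>a\<in>S. ct a \<in> ?TG a" "t = (\<Sum>a\<in>S. ct a)"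
      using Tdec[of t] by (elim exE conjE)
    have sumD: "(\<Sum>a\<in>S. D (ct a)) = D t" unfolding h(3) by (rule lin_sum[OF Dlin, symmetric])
    have zero: "ct a = 0" if "a \<in> S" "a \<noteq> c" for a
    proof -
      have "D (ct a) = 0"
        by (rule graded_unique[OF gsG h(1) _ Dt sumD that]) (use h(2) Ddeg in blast)
      thus ?thesis by (rule D0)
    qed
    show ?thesis unfolding h(3)
    proof (rule Ts.subspace_sum[OF TGsub])
      fix a assume "a \<in> S"
      show "ct a \<in> ?TG c"
      proof (cases "a = c")
        case True thus ?thesis using h(2) \<open>a \<in> S\<close> by simp
      next
        case False thus ?thesis using zero[OF \<open>a \<in> S\<close> False] Ts.subspace_0[OF TGsub] by simp
      qed
    qed
  qed

  have indep: "\<forall>S ct. finite S \<longrightarrow> (\<forall>a\<in>S. ct a \<in> ?TG a) \<longrightarrow> (\<Sum>a\<in>S. ct a) = 0 \<longrightarrow> (\<forall>a\<in>S. ct a = 0)"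
  proof (intro allI impI ballI)
    fix S ct a assume h: "finite S" "\<forall>a\<in>S. ct a \<in> ?TG a" "(\<Sum>a\<in>S. ct a) = 0" "a \<in> S"
    have i: "\<forall>S c. finite S \<longrightarrow> (\<forall>a\<in>S. c a \<in> G a) \<longrightarrow> (\<Sum>a\<in>S. c a) = 0 \<longrightarrow> (\<forall>a\<in>S. c a = 0)"
      using gsG unfolding graded_space_def by (elim conjE) assumption
    have s0: "(\<Sum>a\<in>S. D (ct a)) = 0" using h(3) lin_sum[OF Dlin, of ct S, symmetric] Dzero by simp
    have mem: "D (ct a) \<in> G a" if "a \<in> S" for a using that by (intro Ddeg bspec[OF h(2)])
    have "\<forall>a\<in>S. D (ct a) = 0"
    proof
      fix a assume aS: "a \<in> S"
      show "D (ct a) = 0" by (rule i[rule_format, of S "\<lambda>a. D (ct a)", OF h(1) mem s0 aS])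
    qed
    thus "ct a = 0" using h(4) D0 by simp
  qed
  have gsT: "graded_space sT ?TG"
    unfolding graded_space_def
  proof (intro conjI)
    show "vector_space sT" by (rule Ts.vector_space_axioms)
    show "\<forall>a. Ts.subspace (?TG a)" using TGsub by simp
    show "\<forall>v. \<exists>S c. finite S \<and> (\<forall>a\<in>S. c a \<in> ?TG a) \<and> v = (\<Sum>a\<in>S. c a)" using Tdec by simp
  qed (rule indep)
  have brTdeg: "\<forall>a b x y. x \<in> ?TG a \<longrightarrow> y \<in> ?TG b \<longrightarrow> brT x y \<in> ?TG (a + b)"
  proof (intro allI impI)
    fix a b x y assume "x \<in> ?TG a" "y \<in> ?TG b"
    hence "D (brT x y) \<in> G (a + b)" unfolding hom by (intro brdeg Ddeg)
    thus "brT x y \<in> ?TG (a + b)" by (rule Dpre)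
  qed
  have taudeg: "\<forall>a. tau ` ?TG a \<subseteq> ?TG a"
  proof (intro allI subsetI)
    fix a t assume "t \<in> tau ` ?TG a"
    then obtain u where u: "u \<in> ?TG a" "t = tau u" by blast
    have "D t \<in> G a" unfolding u(2) Dtau by (intro aldeg Ddeg u(1))
    thus "t \<in> ?TG a" by (rule Dpre)
  qed
  have leib: "\<forall>a b c u v w. u \<in> ?TG a \<longrightarrow> v \<in> ?TG b \<longrightarrow> w \<in> ?TG c \<longrightarrow>
        brT (tau u) (brT v w) = brT (brT u v) (tau w) + sT (eps a b) (brT (tau v) (brT u w))"
  proof (intro allI impI)
    fix a b c u v w assume u: "u \<in> ?TG a" and v: "v \<in> ?TG b" and w: "w \<in> ?TG c"
    have "D (brT (tau u) (brT v w)) = D (brT (brT u v) (tau w) + sT (eps a b) (brT (tau v) (brT u w)))"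
      unfolding lin_add[OF Dlin] lin_scale[OF Dlin] hom Dtau
      by (rule lie_leibniz[OF chl eps Ddeg[OF u] Ddeg[OF v] Ddeg[OF w]])
    thus "brT (tau u) (brT v w) = brT (brT u v) (tau w) + sT (eps a b) (brT (tau v) (brT u w))"
      by (rule injD[OF Dinj])
  qed
  have Bbil': "bilin sT sT (*) (\<lambda>u v. Bg (D u) (D v))"
    unfolding bilin_def
  proof (intro conjI allI)
    fix x show "Vector_Spaces.linear sT (*) (\<lambda>v. Bg (D x) (D v))" by (rule lin_comp[OF Dlin Bl2])
  next
    fix y show "Vector_Spaces.linear sT (*) (\<lambda>u. Bg (D u) (D y))" by (rule lin_comp[OF Dlin Bl1])
  qed
  have ndl': "\<forall>x. (\<forall>y. Bg (D x) (D y) = 0) \<longrightarrow> x = 0"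
  proof (intro allI impI)
    fix x assume h: "\<forall>y. Bg (D x) (D y) = 0"
    have "\<forall>z. Bg (D x) z = 0"
    proof
      fix z obtain t where "z = D t" using Dsurj by blast
      thus "Bg (D x) z = 0" using h by simp
    qed
    hence "D x = 0" by (intro ndl[rule_format]) simp
    thus "x = 0" by (rule D0)
  qed
  have ndr': "\<forall>y. (\<forall>x. Bg (D x) (D y) = 0) \<longrightarrow> y = 0"
  proof (intro allI impI)
    fix y assume h: "\<forall>x. Bg (D x) (D y) = 0"
    have "\<forall>z. Bg z (D y) = 0"
    proof
      fix z obtain t where "z = D t" using Dsurj by blast
      thus "Bg z (D y) = 0" using h by simp
    qed
    hence "D y = 0" by (intro ndr[rule_format]) simp
    thus "y = 0" by (rule D0)
  qed
  have sym': "\<forall>a b x y. x \<in> ?TG a \<longrightarrow> y \<in> ?TG b \<longrightarrow> Bg (D x) (D y) = eps a b * Bg (D y) (D x)"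
  proof (intro allI impI)
    fix a b x y assume x: "x \<in> ?TG a" and y: "y \<in> ?TG b"
    show "Bg (D x) (D y) = eps a b * Bg (D y) (D x)"
      by (rule Bsym[rule_format, OF Ddeg[OF x] Ddeg[OF y]])
  qed
  have inv': "\<forall>x y z. Bg (D (brT x y)) (D z) = Bg (D x) (D (brT y z))"
    unfolding hom by (intro allI) (rule Binv[rule_format])
  have tsym': "\<forall>x y. Bg (D (tau x)) (D y) = Bg (D x) (D (tau y))"
    unfolding Dtau by (intro allI) (rule Bal[rule_format])
  show ?thesis
    unfolding quadratic_color_hom_leibniz_def color_hom_leibniz_def even_bilin_def even_map_def
    using gsT brT_bilin brTdeg tau_lin taudeg leib Bbil' ndl' ndr' sym' inv' tsym'
    by (intro conjI) assumption+
qed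

end
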